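(* Let $n \ge 1$. A general cubic form $p \in H_3(\mathbb{C}^n)$ has a unique representation $$p(x_1,\dots,x_n) = \sum_{1 \le i \le j \le n} \bigl(t_{\{i,j\},i}x_i + t_{\{i,j\},i+1}x_{i+1} + \cdots + t_{\{i,j\},j}x_j\bigr)^3,$$ with $t_{\{i,j\},k} \in \mathbb{C}$. Thus for each pair $i \le j$ the linear form cubed involves only the variables $x_i,\dots,x_j$.
   Context: $H_d(\mathbb{C}^n)$ denotes the complex vector space of homogeneous polynomials (forms) of degree $d$ in $x_1,\dots,x_n$. "A general $p$ has property P" means P holds for all $p$ in a nonempty Zariski-open subset of $H_d(\mathbb{C}^n)$. Representations are counted up to permutation of like summands. A summand $f^k$ is identified with $(\zeta f)^k$ whenever $\zeta^k=1$. *)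

theory Defs
  imports Complex_Main "HOL-Library.Multiset"
begin

text \<open>Monomials of degree d in x_0,...,x_{n-1} are multisets of variable indices.
  A form in H_d(C^n) is given by its coefficient vector, a function on monomials
  that vanishes outside the admissible monomials.\<close>

definition monomials :: "nat \<Rightarrow> nat \<Rightarrow> nat multiset set" where
  "monomials d n = {m. size m = d \<and> set_mset m \<subseteq> {..<n}}"

definition forms :: "nat \<Rightarrow> nat \<Rightarrow> (nat multiset \<Rightarrow> complex) set" where
  "forms d n = {c. \<forall>m. m \<notin> monomials d n \<longrightarrow> c m = 0}"

definition eval_form :: "nat \<Rightarrow> nat \<Rightarrow> (nat multiset \<Rightarrow> complex) \<Rightarrow> (nat \<Rightarrow> complex) \<Rightarrow> complex" where
  "eval_form d n c x = (\<Sum>m\<in>monomials d n. c m * (\<Prod>i\<in>#m. x i))"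

inductive poly_fun :: "(('i \<Rightarrow> complex) \<Rightarrow> complex) \<Rightarrow> bool" where
  const: "poly_fun (\<lambda>_. a)"
| var: "poly_fun (\<lambda>c. c i)"
| add: "poly_fun f \<Longrightarrow> poly_fun g \<Longrightarrow> poly_fun (\<lambda>c. f c + g c)"
| mult: "poly_fun f \<Longrightarrow> poly_fun g \<Longrightarrow> poly_fun (\<lambda>c. f c * g c)"

text \<open>A general element of H_d(C^n) has property P: P holds on a nonempty
  Zariski-open subset, i.e. (basic opens suffice) on the non-vanishing locus of a
  polynomial function that does not vanish identically on H_d(C^n).\<close>
definition general_form :: "nat \<Rightarrow> nat \<Rightarrow> ((nat multiset \<Rightarrow> complex) \<Rightarrow> bool) \<Rightarrow> bool" where
  "general_form d n P \<longleftrightarrow> (\<exists>q. poly_fun q \<and> (\<exists>c\<in>forms d n. q c \<noteq> 0) \<and>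
      (\<forall>c\<in>forms d n. q c \<noteq> 0 \<longrightarrow> P c))"

text \<open>The representation (0-indexed variables): summands indexed by pairs i \<le> j < n,
  the (i,j) summand being (\<Sum>k=i..j. t (i,j) k * x_k)^3.\<close>
definition interval_cubic_rep :: "nat \<Rightarrow> (nat multiset \<Rightarrow> complex) \<Rightarrow> (nat \<times> nat \<Rightarrow> nat \<Rightarrow> complex) \<Rightarrow> bool" where
  "interval_cubic_rep n c t \<longleftrightarrow> (\<forall>x. eval_form 3 n c x =
      (\<Sum>(i,j)\<in>{(i,j). i \<le> j \<and> j < n}. (\<Sum>k=i..j. t (i,j) k * x k) ^ 3))"

definition same_rep :: "nat \<Rightarrow> (nat \<times> nat \<Rightarrow> nat \<Rightarrow> complex) \<Rightarrow> (nat \<times> nat \<Rightarrow> nat \<Rightarrow> complex) \<Rightarrow> bool" where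
  "same_rep n t t' \<longleftrightarrow> (\<forall>i j. i \<le> j \<and> j < n \<longrightarrow>
      (\<exists>\<zeta>::complex. \<zeta> ^ 3 = 1 \<and> (\<forall>k\<in>{i..j}. t' (i,j) k = \<zeta> * t (i,j) k)))"

end

theory Submission
  imports Defs "HOL-Library.Product_Lexorder"
begin


definition eI :: "nat \<Rightarrow> nat \<Rightarrow> complex" where "eI i k = (if k = i then 1 else 0)"

lemma ms3_iij: "i \<noteq> j \<Longrightarrow> ({#a,b,c#} = {#i,i,j#}) = (a=i\<and>b=i\<and>c=j \<or> a=i\<and>b=j\<and>c=i \<or> a=j\<and>b=i\<and>c=i)"
  by (auto simp: add_eq_conv_diff)

lemma ms3_iii: "({#a,b,c#} = {#i,i,i#}) = (a=i\<and>b=i\<and>c=i)"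
  by (auto simp: add_eq_conv_diff)

lemma ms3_ijk: "i \<noteq> j \<Longrightarrow> i \<noteq> k \<Longrightarrow> j \<noteq> k \<Longrightarrow> ({#a,b,c#} = {#i,j,k#}) = 
  (a=i\<and>b=j\<and>c=k \<or> a=i\<and>b=k\<and>c=j \<or> a=j\<and>b=i\<and>c=k \<or> a=j\<and>b=k\<and>c=i \<or> a=k\<and>b=i\<and>c=j \<or> a=k\<and>b=j\<and>c=i)"
  by (auto simp: add_eq_conv_diff)

definition E1 :: "nat \<Rightarrow> ((nat \<Rightarrow> complex) \<Rightarrow> complex) \<Rightarrow> complex" where
  "E1 i F = F (eI i)"

definition E2 :: "nat \<Rightarrow> nat \<Rightarrow> ((nat \<Rightarrow> complex) \<Rightarrow> complex) \<Rightarrow> complex" where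
  "E2 i j F = ((F (\<lambda>k. eI i k + eI j k) - F (\<lambda>k. eI i k) - F (eI j))
     + (F (\<lambda>k. - eI i k + eI j k) - F (\<lambda>k. - eI i k) - F (eI j))) / 2"

definition E3 :: "nat \<Rightarrow> nat \<Rightarrow> nat \<Rightarrow> ((nat \<Rightarrow> complex) \<Rightarrow> complex) \<Rightarrow> complex" where
  "E3 i j k F = F (\<lambda>l. eI i l + eI j l + eI k l) - F (\<lambda>l. eI i l + eI j l) - F (\<lambda>l. eI i l + eI k l)
     - F (\<lambda>l. eI j l + eI k l) + F (eI i) + F (eI j) + F (eI k) - F (\<lambda>l. 0)"

lemma E1_mono: "E1 i (\<lambda>x. x a * x b * x c) = (if {#a,b,c#} = {#i,i,i#} then 1 else 0)"
  unfolding E1_def ms3_iii eI_def by simp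

lemma E2_mono: "i \<noteq> j \<Longrightarrow> E2 i j (\<lambda>x. x a * x b * x c) = (if {#a,b,c#} = {#i,i,j#} then 1 else 0)"
  unfolding E2_def ms3_iij eI_def
  by (cases "a = i"; cases "a = j"; cases "b = i"; cases "b = j"; cases "c = i"; cases "c = j"; simp)

lemma four_cases: "a = i \<or> a = j \<or> a = k \<or> (a \<noteq> i \<and> a \<noteq> j \<and> a \<noteq> k)" by blast

lemma E3_mono: "i \<noteq> j \<Longrightarrow> i \<noteq> k \<Longrightarrow> j \<noteq> k \<Longrightarrow>
   E3 i j k (\<lambda>x. x a * x b * x c) = (if {#a,b,c#} = {#i,j,k#} then 1 else 0)"
  unfolding E3_def eI_def
  using four_cases[of a i j k] four_cases[of b i j k] four_cases[of c i j k]
  apply (elim disjE)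
  apply (simp_all add: ms3_ijk add_eq_conv_diff)
  done

lemma E1_lin: "E1 i (\<lambda>x. \<Sum>m\<in>S. g m * f m x) = (\<Sum>m\<in>S. g m * E1 i (f m))"
  by (simp add: E1_def)

lemma E2_lin: "E2 i j (\<lambda>x. \<Sum>m\<in>S. g m * f m x) = (\<Sum>m\<in>S. g m * E2 i j (f m))"
  by (simp add: E2_def sum_subtractf[symmetric] sum.distrib[symmetric] sum_divide_distrib algebra_simps)

lemma E3_lin: "E3 i j k (\<lambda>x. \<Sum>m\<in>S. g m * f m x) = (\<Sum>m\<in>S. g m * E3 i j k (f m))"
  by (simp add: E3_def sum_subtractf[symmetric] sum.distrib[symmetric] algebra_simps)

lemma size3_obtain:
  assumes "size m = 3" obtains a b c where "m = {#a,b,c#}"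
proof -
  from assms have s0: "size m = Suc (Suc (Suc 0))" by simp
  then obtain a N where N: "m = add_mset a N" using size_eq_Suc_imp_eq_union by blast
  then have s1: "size N = Suc (Suc 0)" using s0 by simp
  then obtain b N' where N': "N = add_mset b N'" using size_eq_Suc_imp_eq_union by blast
  then have s2: "size N' = Suc 0" using s1 by simp
  then obtain c N'' where N'': "N' = add_mset c N''" using size_eq_Suc_imp_eq_union by blast
  then have "N'' = {#}" using s2 by simp
  then show ?thesis using N N' N'' that by auto
qed

lemma finite_monomials: "finite (monomials d n)"
proof -
  have "monomials d n = multisets_of_size {..<n} d" unfolding monomials_def multisets_of_size_def by auto
  then show ?thesis by auto
qed

lemma eval_form_eq: "eval_form d n c = (\<lambda>x. \<Sum>m\<in>monomials d n. c m * (\<Prod>i\<in>#m. x i))"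
  by (simp add: eval_form_def fun_eq_iff)

lemma coeff_sum:
  assumes c: "c \<in> forms d n" and h: "\<And>m. m \<in> monomials d n \<Longrightarrow> E m = (if m = m0 then 1 else 0)"
  shows "(\<Sum>m\<in>monomials d n. c m * E m) = c m0"
proof -
  have "(\<Sum>m\<in>monomials d n. c m * E m) = (\<Sum>m\<in>monomials d n. (if m = m0 then c m else 0))"
    by (rule sum.cong) (auto simp: h)
  also have "\<dots> = (if m0 \<in> monomials d n then c m0 else 0)" by (simp add: sum.delta' finite_monomials)
  also have "\<dots> = c m0" using c by (auto simp: forms_def)
  finally show ?thesis .
qed

lemma coeff1: "c \<in> forms 3 n \<Longrightarrow> E1 i (eval_form 3 n c) = c {#i,i,i#}"
  unfolding eval_form_eq E1_lin
proof (rule coeff_sum)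
  fix m assume "m \<in> monomials 3 n"
  then obtain a b d where "m = {#a,b,d#}" using size3_obtain monomials_def by blast
  then show "E1 i (\<lambda>x. \<Prod>i\<in>#m. x i) = (if m = {#i, i, i#} then 1 else 0)"
    using E1_mono[of i a b d] by (simp add: mult.assoc)
qed

lemma coeff2: "c \<in> forms 3 n \<Longrightarrow> i \<noteq> j \<Longrightarrow> E2 i j (eval_form 3 n c) = c {#i,i,j#}"
  unfolding eval_form_eq E2_lin
proof (rule coeff_sum)
  fix m assume "m \<in> monomials 3 n" "i \<noteq> j"
  then obtain a b d where "m = {#a,b,d#}" using size3_obtain monomials_def by blast
  then show "E2 i j (\<lambda>x. \<Prod>i\<in>#m. x i) = (if m = {#i, i, j#} then 1 else 0)"
    using E2_mono[of i j a b d] \<open>i \<noteq> j\<close> by (simp add: mult.assoc)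
qed

lemma coeff3: "c \<in> forms 3 n \<Longrightarrow> i \<noteq> j \<Longrightarrow> i \<noteq> k \<Longrightarrow> j \<noteq> k \<Longrightarrow> E3 i j k (eval_form 3 n c) = c {#i,j,k#}"
  unfolding eval_form_eq E3_lin
proof (rule coeff_sum)
  fix m assume "m \<in> monomials 3 n" "i \<noteq> j" "i \<noteq> k" "j \<noteq> k"
  then obtain a b d where "m = {#a,b,d#}" using size3_obtain monomials_def by blast
  then show "E3 i j k (\<lambda>x. \<Prod>i\<in>#m. x i) = (if m = {#i, j, k#} then 1 else 0)"
    using E3_mono[of i j k a b d] \<open>i \<noteq> j\<close> \<open>i \<noteq> k\<close> \<open>j \<noteq> k\<close> by (simp add: mult.assoc)
qed

lemma eval_inj:
  assumes c: "c \<in> forms 3 n" and c': "c' \<in> forms 3 n" and e: "eval_form 3 n c = eval_form 3 n c'"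
  shows "c = c'"
proof
  fix m
  show "c m = c' m"
  proof (cases "m \<in> monomials 3 n")
    case False then show ?thesis using c c' by (auto simp: forms_def)
  next
    case True
    then obtain a b d where m: "m = {#a,b,d#}" using size3_obtain monomials_def by blast
    consider "a = b \<and> b = d" | "a = b \<and> b \<noteq> d" | "a = d \<and> a \<noteq> b" | "b = d \<and> a \<noteq> b" | "a \<noteq> b \<and> a \<noteq> d \<and> b \<noteq> d"
      by blast
    then show ?thesis
    proof cases
      case 1 then show ?thesis using coeff1[OF c, of a] coeff1[OF c', of a] e m by simp
    next
      case 2 then show ?thesis using coeff2[OF c, of a d] coeff2[OF c', of a d] e m by simp
    next
      case 3 then have "m = {#a,a,b#}" using m by (simp add: add_mset_commute)
      then show ?thesis using 3 coeff2[OF c, of a b] coeff2[OF c', of a b] e by simp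
    next
      case 4 then have "m = {#b,b,a#}" using m by (simp add: add_mset_commute)
      then show ?thesis using 4 coeff2[OF c, of b a] coeff2[OF c', of b a] e by simp
    next
      case 5 then show ?thesis using coeff3[OF c, of a b d] coeff3[OF c', of a b d] e m by simp
    qed
  qed
qed



definition cubev :: "nat \<times> nat \<Rightarrow> (nat \<Rightarrow> complex) \<Rightarrow> nat multiset \<Rightarrow> complex" where
  "cubev w a m = (\<Sum>p\<in>{fst w..snd w}. \<Sum>q\<in>{fst w..snd w}. \<Sum>r\<in>{fst w..snd w}.
      if {#p,q,r#} = m then a p * a q * a r else 0)"

lemma cubev_zero:
  assumes "\<not> set_mset m \<subseteq> {fst w..snd w}" shows "cubev w a m = 0"
proof -
  have "\<And>p q r. p \<in> {fst w..snd w} \<Longrightarrow> q \<in> {fst w..snd w} \<Longrightarrow> r \<in> {fst w..snd w} \<Longrightarrow> {#p,q,r#} \<noteq> m"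
    using assms by auto
  then show ?thesis unfolding cubev_def by (intro sum.neutral ballI) auto
qed

lemma cubev_forms:
  assumes "snd w < n" shows "cubev w a \<in> forms 3 n"
  unfolding forms_def
proof (intro CollectI allI impI)
  fix m assume m: "m \<notin> monomials 3 n"
  have "\<And>p q r. p \<in> {fst w..snd w} \<Longrightarrow> q \<in> {fst w..snd w} \<Longrightarrow> r \<in> {fst w..snd w} \<Longrightarrow> {#p,q,r#} \<noteq> m"
    using assms m by (auto simp: monomials_def)
  then show "cubev w a m = 0" unfolding cubev_def by (intro sum.neutral ballI) auto
qed

lemma cubev_eval:
  assumes "snd w < n"
  shows "eval_form 3 n (cubev w a) x = (\<Sum>k\<in>{fst w..snd w}. a k * x k) ^ 3"
proof -
  let ?I = "{fst w..snd w}" and ?M = "monomials 3 n"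
  have "eval_form 3 n (cubev w a) x = (\<Sum>m\<in>?M. \<Sum>p\<in>?I. \<Sum>q\<in>?I. \<Sum>r\<in>?I.
      if {#p,q,r#} = m then a p * a q * a r * (x p * x q * x r) else 0)"
    unfolding eval_form_def cubev_def sum_distrib_right
    by (intro sum.cong refl) auto
  also have "\<dots> = (\<Sum>p\<in>?I. \<Sum>q\<in>?I. \<Sum>r\<in>?I. \<Sum>m\<in>?M.
      if {#p,q,r#} = m then a p * a q * a r * (x p * x q * x r) else 0)"
    apply (rule trans[OF sum.swap])
    apply (intro sum.cong refl)
    apply (rule trans[OF sum.swap])
    apply (intro sum.cong refl)
    apply (rule sum.swap)
    done
  also have "\<dots> = (\<Sum>p\<in>?I. \<Sum>q\<in>?I. \<Sum>r\<in>?I. a p * a q * a r * (x p * x q * x r))"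
  proof (intro sum.cong refl)
    fix p q r assume "p \<in> ?I" "q \<in> ?I" "r \<in> ?I"
    then have "{#p,q,r#} \<in> ?M" using assms by (auto simp: monomials_def)
    then show "(\<Sum>m\<in>?M. if {#p,q,r#} = m then a p * a q * a r * (x p * x q * x r) else 0)
       = a p * a q * a r * (x p * x q * x r)"
      by (simp add: sum.delta finite_monomials)
  qed
  also have "\<dots> = (\<Sum>k\<in>?I. a k * x k) ^ 3"
    by (simp add: power3_eq_cube sum_distrib_left sum_distrib_right algebra_simps)
  finally show ?thesis .
qed

lemma cubev_homog: "cubev w (\<lambda>k. c * a k) m = c ^ 3 * cubev w a m"
  unfolding cubev_def sum_distrib_left
  by (intro sum.cong refl) (auto simp: power3_eq_cube)

lemma cubev_cong: "(\<And>k. k \<in> {fst w..snd w} \<Longrightarrow> a k = b k) \<Longrightarrow> cubev w a = cubev w b"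
  unfolding cubev_def by (intro ext sum.cong refl) auto

lemma lsum_e: "finite I \<Longrightarrow> (\<Sum>k\<in>I. a k * eI p k) = (if p \<in> I then a p else 0)"
  by (simp add: eI_def if_distrib cong: if_cong) 

lemma lsum_pts:
  assumes "p \<in> I" "q \<in> I" "r \<in> I" "finite I"
  shows "(\<Sum>k\<in>I. a k * eI p k) = a p"
    "(\<Sum>k\<in>I. a k * (eI p k + eI q k)) = a p + a q"
    "(\<Sum>k\<in>I. a k * (- eI p k + eI q k)) = - a p + a q"
    "(\<Sum>k\<in>I. a k * (- eI p k)) = - a p"
    "(\<Sum>k\<in>I. a k * (eI p k + eI q k + eI r k)) = a p + a q + a r"
    "(\<Sum>k\<in>I. a k * 0) = 0"
  using assms by (simp_all add: distrib_left right_diff_distrib sum_subtractf sum.distrib sum_negf lsum_e)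

lemma cub1:
  assumes "p \<in> {fst w..snd w}"
  shows "cubev w a {#p,p,p#} = a p ^ 3"
proof -
  have L: "\<And>x. eval_form 3 (Suc (snd w)) (cubev w a) x = (\<Sum>k\<in>{fst w..snd w}. a k * x k) ^ 3"
    by (rule cubev_eval) simp
  have "cubev w a {#p,p,p#} = E1 p (eval_form 3 (Suc (snd w)) (cubev w a))"
    by (rule coeff1[symmetric], rule cubev_forms) simp
  also have "\<dots> = a p ^ 3" unfolding E1_def L lsum_pts(1)[OF assms assms assms finite_atLeastAtMost] ..
  finally show ?thesis .
qed

lemma cub2:
  assumes p: "p \<in> {fst w..snd w}" and q: "q \<in> {fst w..snd w}" and "p \<noteq> q"
  shows "cubev w a {#p,p,q#} = 3 * a p ^ 2 * a q"
proof -
  have L: "\<And>x. eval_form 3 (Suc (snd w)) (cubev w a) x = (\<Sum>k\<in>{fst w..snd w}. a k * x k) ^ 3"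
    by (rule cubev_eval) simp
  note S = lsum_pts[OF p q q finite_atLeastAtMost, of a]
  have "cubev w a {#p,p,q#} = E2 p q (eval_form 3 (Suc (snd w)) (cubev w a))"
    by (rule coeff2[symmetric], rule cubev_forms) (use assms in simp_all)
  also have "\<dots> = 3 * a p ^ 2 * a q" unfolding E2_def L S lsum_pts(1)[OF q q q finite_atLeastAtMost]
    by (simp add: power3_eq_cube power2_eq_square algebra_simps)
  finally show ?thesis .
qed

lemma cub3:
  assumes p: "p \<in> {fst w..snd w}" and q: "q \<in> {fst w..snd w}" and r: "r \<in> {fst w..snd w}"
    and "p \<noteq> q" "p \<noteq> r" "q \<noteq> r"
  shows "cubev w a {#p,q,r#} = 6 * a p * a q * a r"
proof -
  have L: "\<And>x. eval_form 3 (Suc (snd w)) (cubev w a) x = (\<Sum>k\<in>{fst w..snd w}. a k * x k) ^ 3"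
    by (rule cubev_eval) simp
  have "cubev w a {#p,q,r#} = E3 p q r (eval_form 3 (Suc (snd w)) (cubev w a))"
    by (rule coeff3[symmetric], rule cubev_forms) (use assms in simp_all)
  also have "\<dots> = 6 * a p * a q * a r" unfolding E3_def L
      lsum_pts[OF p q r finite_atLeastAtMost, of a] lsum_pts[OF p r r finite_atLeastAtMost, of a]
      lsum_pts[OF q r r finite_atLeastAtMost, of a] lsum_pts[OF q q q finite_atLeastAtMost, of a]
      lsum_pts[OF r r r finite_atLeastAtMost, of a]
    by (simp add: power3_eq_cube algebra_simps)
  finally show ?thesis .
qed



lemma pf_minus: "poly_fun f \<Longrightarrow> poly_fun g \<Longrightarrow> poly_fun (\<lambda>c. f c - g c)"
proof -
  assume f: "poly_fun f" and g: "poly_fun g"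
  have "poly_fun (\<lambda>c. f c + (\<lambda>_. -1) c * g c)"
    by (intro poly_fun.add poly_fun.mult f g poly_fun.const)
  then show ?thesis by simp
qed

lemma pf_if: "poly_fun f \<Longrightarrow> poly_fun g \<Longrightarrow> poly_fun (\<lambda>c. if P then f c else g c)"
  by (cases P) simp_all

lemma pf_sum: "(\<And>x. x \<in> A \<Longrightarrow> poly_fun (f x)) \<Longrightarrow> poly_fun (\<lambda>c. \<Sum>x\<in>A. f x c)"
proof (induction A rule: infinite_finite_induct)
  case (infinite A) then show ?case by (simp add: poly_fun.const)
next
  case empty then show ?case by (simp add: poly_fun.const)
next
  case (insert x F) then show ?case by (simp add: poly_fun.add)
qed

lemma pf_cubev:
  assumes "\<And>k. poly_fun (\<lambda>c. a c k)"
  shows "poly_fun (\<lambda>c. cubev w (a c) m)"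
  unfolding cubev_def
  by (intro pf_sum pf_if poly_fun.mult assms poly_fun.const)



definition AA :: "(nat multiset \<Rightarrow> complex) \<Rightarrow> nat \<times> nat \<Rightarrow> complex" where
  "AA R w = R {#fst w, fst w, snd w#}"
definition BB :: "(nat multiset \<Rightarrow> complex) \<Rightarrow> nat \<times> nat \<Rightarrow> complex" where
  "BB R w = R {#fst w, snd w, snd w#}"
definition nu :: "(nat multiset \<Rightarrow> complex) \<Rightarrow> nat \<times> nat \<Rightarrow> nat \<Rightarrow> complex" where
  "nu R w k = (if fst w = snd w then eI (fst w) k else if k = fst w then 2 * AA R w
     else if k = snd w then 2 * BB R w else R {#fst w, k, snd w#})"
definition den :: "(nat multiset \<Rightarrow> complex) \<Rightarrow> nat \<times> nat \<Rightarrow> complex" where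
  "den R w = (if fst w = snd w then 1 else 24 * AA R w * BB R w)"
definition Psi :: "(nat multiset \<Rightarrow> complex) \<Rightarrow> nat \<times> nat \<Rightarrow> nat multiset \<Rightarrow> complex" where
  "Psi R w m = (if fst w = snd w then R {#fst w, fst w, fst w#} * cubev w (nu R w) m else cubev w (nu R w) m)"
definition Phi :: "(nat multiset \<Rightarrow> complex) \<Rightarrow> nat \<times> nat \<Rightarrow> nat multiset \<Rightarrow> complex" where
  "Phi R w m = Psi R w m / den R w"
definition nondeg :: "(nat multiset \<Rightarrow> complex) \<Rightarrow> nat \<times> nat \<Rightarrow> bool" where
  "nondeg R w \<longleftrightarrow> (fst w \<noteq> snd w \<longrightarrow> AA R w \<noteq> 0 \<and> BB R w \<noteq> 0)"
definition cbrt :: "complex \<Rightarrow> complex" where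
  "cbrt z = (SOME u. u ^ 3 = z)"
definition step :: "(nat multiset \<Rightarrow> complex) \<Rightarrow> nat \<times> nat \<Rightarrow> nat \<Rightarrow> complex" where
  "step R w = (\<lambda>k. cbrt (if fst w = snd w then R {#fst w, fst w, fst w#} else 1 / den R w) * nu R w k)"
definition own :: "nat \<times> nat \<Rightarrow> nat multiset \<Rightarrow> bool" where
  "own w m \<longleftrightarrow> size m = 3 \<and> fst w \<in># m \<and> snd w \<in># m \<and> set_mset m \<subseteq> {fst w..snd w}"

lemma cbrt: "cbrt z ^ 3 = z"
proof -
  let ?u = "rcis (root 3 (cmod z)) (Arg z / 3)"
  have "?u ^ 3 = rcis (root 3 (cmod z) ^ 3) (Arg z)" by (simp add: DeMoivre2)
  also have "root 3 (cmod z) ^ 3 = cmod z" by simp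
  finally have "?u ^ 3 = z" by (simp add: rcis_cmod_Arg)
  then show ?thesis unfolding cbrt_def by (rule someI)
qed

lemma cube_step: "cubev w (step R w) = Phi R w"
proof
  fix m
  show "cubev w (step R w) m = Phi R w m"
    unfolding step_def cubev_homog cbrt Phi_def Psi_def
    by (auto simp: den_def)
qed

lemma own_cases:
  assumes "own w m" "fst w < snd w"
  shows "m = {#fst w, fst w, snd w#} \<or> m = {#fst w, snd w, snd w#} \<or>
         (\<exists>k. fst w < k \<and> k < snd w \<and> m = {#fst w, k, snd w#})"
proof -
  let ?i = "fst w" and ?j = "snd w"
  from assms have "?i \<in># m" by (simp add: own_def)
  then obtain m1 where m1: "m = add_mset ?i m1" by (blast dest: multi_member_split)
  from assms have "?j \<in># m1" using m1 by (auto simp: own_def)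
  then obtain m2 where m2: "m1 = add_mset ?j m2" by (blast dest: multi_member_split)
  from assms m1 m2 have "size m2 = 1" by (simp add: own_def)
  then obtain k where k: "m2 = {#k#}" using size_1_singleton_mset by blast
  have km: "m = {#?i, k, ?j#}" using m1 m2 k by (simp add: add_mset_commute)
  have "k \<in> {?i..?j}" using assms km by (auto simp: own_def)
  then consider "k = ?i" | "k = ?j" | "?i < k \<and> k < ?j" by fastforce
  then show ?thesis using km by cases (auto simp: add_mset_commute)
qed

lemma own_single:
  assumes "own w m" "fst w = snd w"
  shows "m = {#fst w, fst w, fst w#}"
proof -
  from assms have s: "set_mset m \<subseteq> {fst w}" "size m = 3" by (auto simp: own_def)
  obtain a b c where "m = {#a,b,c#}" using size3_obtain s(2) by blast
  then show ?thesis using s by auto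
qed

lemma Phi_own:
  assumes nd: "nondeg R w" and le: "fst w \<le> snd w" and o: "own w m"
  shows "Phi R w m = R m"
proof (cases "fst w = snd w")
  case True
  then have m: "m = {#fst w, fst w, fst w#}" using own_single o by blast
  have "cubev w (nu R w) m = 1" unfolding m using True by (subst cub1) (auto simp: nu_def eI_def)
  then show ?thesis using True m by (simp add: Phi_def Psi_def den_def)
next
  case False
  let ?i = "fst w" and ?j = "snd w"
  have lt: "?i < ?j" using False le by simp
  have A: "AA R w \<noteq> 0" and B: "BB R w \<noteq> 0" using nd False by (auto simp: nondeg_def)
  have I: "?i \<in> {?i..?j}" "?j \<in> {?i..?j}" using lt by auto
  have ni: "nu R w ?i = 2 * AA R w" and nj: "nu R w ?j = 2 * BB R w" using False by (auto simp: nu_def)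
  have dd: "den R w = 24 * AA R w * BB R w" using False by (simp add: den_def)
  from own_cases[OF o lt] consider "m = {#?i, ?i, ?j#}" | "m = {#?i, ?j, ?j#}" |
     k where "?i < k" "k < ?j" "m = {#?i, k, ?j#}" by blast
  then show ?thesis
  proof cases
    case 1
    have "cubev w (nu R w) m = 3 * nu R w ?i ^ 2 * nu R w ?j" unfolding 1 using I lt by (intro cub2) auto
    then show ?thesis using False A B 1 unfolding Phi_def Psi_def dd ni nj
      by (simp add: AA_def field_simps power2_eq_square)
  next
    case 2
    then have m: "m = {#?j, ?j, ?i#}" by (simp add: add_mset_commute)
    have "cubev w (nu R w) m = 3 * nu R w ?j ^ 2 * nu R w ?i" unfolding m using I lt by (intro cub2) auto
    then show ?thesis using False A B m unfolding Phi_def Psi_def dd ni nj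
      by (simp add: BB_def field_simps power2_eq_square add_mset_commute)
  next
    case (3 k)
    have nk: "nu R w k = R m" using 3 by (auto simp: nu_def)
    have "cubev w (nu R w) m = 6 * nu R w ?i * nu R w k * nu R w ?j" unfolding 3(3) using I lt 3
      by (intro cub3) auto
    then show ?thesis using False A B unfolding Phi_def Psi_def dd ni nj nk
      by (simp add: field_simps)
  qed
qed



lemma nu_single: "fst w = snd w \<Longrightarrow> nu R w = eI (fst w)"
  by (simp add: fun_eq_iff nu_def)

lemma Phi_cube:
  assumes le: "fst w \<le> snd w" and own_eq: "\<And>m. own w m \<Longrightarrow> R m = cubev w b m"
    and nz: "fst w \<noteq> snd w \<Longrightarrow> b (fst w) \<noteq> 0 \<and> b (snd w) \<noteq> 0"
  shows "Phi R w = cubev w b"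
proof (cases "fst w = snd w")
  case True
  let ?i = "fst w"
  have o: "own w {#?i,?i,?i#}" using True by (simp add: own_def)
  have Ri: "R {#?i,?i,?i#} = b ?i ^ 3" using own_eq[OF o] cub1[of ?i w b] True by simp
  have "cubev w b = cubev w (\<lambda>k. b ?i * eI ?i k)"
    by (rule cubev_cong) (use True in \<open>auto simp: eI_def\<close>)
  then show ?thesis using True Ri
    by (simp add: fun_eq_iff Phi_def Psi_def den_def cubev_homog nu_single)
next
  case False
  let ?i = "fst w" and ?j = "snd w"
  have lt: "?i < ?j" using False le by simp
  have I: "?i \<in> {?i..?j}" "?j \<in> {?i..?j}" using lt by auto
  have bi: "b ?i \<noteq> 0" and bj: "b ?j \<noteq> 0" using nz False by auto
  have oA: "own w {#?i,?i,?j#}" and oB: "own w {#?i,?j,?j#}" using lt by (auto simp: own_def)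
  have A: "AA R w = 3 * b ?i ^ 2 * b ?j" unfolding AA_def own_eq[OF oA] using I lt by (intro cub2) auto
  have "cubev w b {#?j,?j,?i#} = 3 * b ?j ^ 2 * b ?i" using I lt by (intro cub2) auto
  then have B: "BB R w = 3 * b ?j ^ 2 * b ?i" unfolding BB_def own_eq[OF oB] by (simp add: add_mset_commute)
  have nuk: "nu R w k = (6 * b ?i * b ?j) * b k" if k: "k \<in> {?i..?j}" for k
  proof -
    consider "k = ?i" | "k = ?j" | "?i < k \<and> k < ?j" using k by fastforce
    then show ?thesis
    proof cases
      case 1 then show ?thesis using False A by (simp add: nu_def power2_eq_square)
    next
      case 2 then show ?thesis using False B lt by (simp add: nu_def power2_eq_square)
    next
      case 3
      have o: "own w {#?i,k,?j#}" using 3 by (auto simp: own_def)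
      have "cubev w b {#?i,k,?j#} = 6 * b ?i * b k * b ?j" using 3 I by (intro cub3) auto
      then show ?thesis using 3 own_eq[OF o] by (auto simp: nu_def)
    qed
  qed
  have cn: "cubev w (nu R w) = cubev w (\<lambda>k. (6 * b ?i * b ?j) * b k)"
    by (rule cubev_cong) (rule nuk)
  have dd: "den R w = (6 * b ?i * b ?j) ^ 3" using False A B
    by (simp add: den_def power2_eq_square power3_eq_cube)
  have "(6 * b ?i * b ?j) ^ 3 \<noteq> 0" using bi bj by simp
  then show ?thesis unfolding fun_eq_iff Phi_def Psi_def dd using False
    by (simp add: cn cubev_homog)
qed

lemma noncover:
  assumes o: "own w m" and le: "fst w \<le> snd w" and len: "snd w' - fst w' \<le> snd w - fst w" and ne: "w' \<noteq> w"
  shows "\<not> set_mset m \<subseteq> {fst w'..snd w'}"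
proof
  assume s: "set_mset m \<subseteq> {fst w'..snd w'}"
  have "fst w \<in># m" "snd w \<in># m" using o by (auto simp: own_def)
  then have "fst w' \<le> fst w" "snd w \<le> snd w'" using s by auto
  then have "fst w' = fst w" "snd w' = snd w" using len le by auto
  then show False using ne by (simp add: prod_eq_iff)
qed

lemma scale:
  assumes le: "fst w \<le> snd w" and d: "\<delta> \<noteq> 0" and nd: "nondeg S w"
  shows "den S w \<noteq> 0" "nondeg (\<lambda>m. S m / \<delta>) w"
    "\<And>m. S m / \<delta> - Phi (\<lambda>m. S m / \<delta>) w m = (den S w * S m - Psi S w m) / (den S w * \<delta>)"
proof -
  show dn: "den S w \<noteq> 0" using nd by (auto simp: den_def nondeg_def)
  show "nondeg (\<lambda>m. S m / \<delta>) w" using nd d by (simp add: nondeg_def AA_def BB_def)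
  fix m
  have Ph: "Phi (\<lambda>m. S m / \<delta>) w m = Psi S w m / (den S w * \<delta>)"
  proof (cases "fst w = snd w")
    case True then show ?thesis by (simp add: Phi_def Psi_def den_def nu_single)
  next
    case False
    have "nu (\<lambda>m. S m / \<delta>) w = (\<lambda>k. (1/\<delta>) * nu S w k)" using False
      by (auto simp: fun_eq_iff nu_def AA_def BB_def)
    then have "cubev w (nu (\<lambda>m. S m / \<delta>) w) m = (1/\<delta>)^3 * cubev w (nu S w) m"
      by (simp only: cubev_homog)
    moreover have "den (\<lambda>m. S m / \<delta>) w = den S w / \<delta>^2" using False by (simp add: den_def AA_def BB_def power2_eq_square)
    ultimately show ?thesis using False d dn
      by (simp add: Phi_def Psi_def) (simp add: power2_eq_square power3_eq_cube field_simps)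
  qed
  show "S m / \<delta> - Phi (\<lambda>m. S m / \<delta>) w m = (den S w * S m - Psi S w m) / (den S w * \<delta>)"
    unfolding Ph using d dn by (simp add: field_simps)
qed



definition okl :: "(nat \<times> nat) list \<Rightarrow> bool" where
  "okl ws \<longleftrightarrow> distinct ws \<and> sorted_wrt (\<lambda>w w'. snd w' - fst w' \<le> snd w - fst w) ws \<and> (\<forall>w\<in>set ws. fst w \<le> snd w)"

lemma okl_cons: "okl (w # ws) \<Longrightarrow> okl ws \<and> w \<notin> set ws \<and> fst w \<le> snd w \<and>
   (\<forall>w'\<in>set ws. snd w' - fst w' \<le> snd w - fst w)"
  by (auto simp: okl_def)

lemma others_vanish:
  assumes "okl (w # ws)" "own w m"
  shows "(\<Sum>w'\<in>set ws. cubev w' (f w') m) = 0"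
proof (rule sum.neutral, rule ballI)
  fix w' assume w': "w' \<in> set ws"
  have "w' \<noteq> w" using okl_cons[OF assms(1)] w' by auto
  then show "cubev w' (f w') m = 0" using okl_cons[OF assms(1)] w' assms(2)
    by (intro cubev_zero noncover) auto
qed

lemma sum_cons: "okl (w # ws) \<Longrightarrow> (\<Sum>w'\<in>set (w # ws). g w') = g w + (\<Sum>w'\<in>set ws. g w')"
  using okl_cons by (simp add: sum.insert)

primrec qq :: "(nat multiset \<Rightarrow> complex) \<Rightarrow> (nat \<times> nat) list \<Rightarrow> complex" where
  "qq S [] = 1"
| "qq S (w # ws) = (if fst w = snd w then 1 else AA S w * BB S w) *
      qq (\<lambda>m. den S w * S m - Psi S w m) ws"

lemma qq_cons_nz: "qq S (w # ws) \<noteq> 0 \<longleftrightarrow> nondeg S w \<and> qq (\<lambda>m. den S w * S m - Psi S w m) ws \<noteq> 0"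
  by (auto simp: nondeg_def)

primrec alg :: "(nat multiset \<Rightarrow> complex) \<Rightarrow> (nat \<times> nat) list \<Rightarrow> nat \<times> nat \<Rightarrow> nat \<Rightarrow> complex" where
  "alg R [] = (\<lambda>w k. 0)"
| "alg R (w # ws) = (alg (\<lambda>m. R m - Phi R w m) ws)(w := step R w)"

lemma exist_lemma:
  assumes "okl ws" "\<delta> \<noteq> 0" "qq S ws \<noteq> 0"
  shows "\<forall>w0\<in>set ws. \<forall>m. own w0 m \<longrightarrow> S m / \<delta> = (\<Sum>w'\<in>set ws. cubev w' (alg (\<lambda>m. S m / \<delta>) ws w') m)"
  using assms
proof (induction ws arbitrary: S \<delta>)
  case Nil then show ?case by simp
next
  case (Cons w ws)
  let ?R = "\<lambda>m. S m / \<delta>"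
  let ?S' = "\<lambda>m. den S w * S m - Psi S w m" and ?d' = "den S w * \<delta>"
  have ok: "okl ws" and wn: "w \<notin> set ws" and le: "fst w \<le> snd w" using okl_cons[OF Cons.prems(1)] by auto
  have nd: "nondeg S w" and q': "qq ?S' ws \<noteq> 0" using Cons.prems(3) qq_cons_nz by auto
  note sc = scale[OF le Cons.prems(2) nd]
  have R': "(\<lambda>m. ?R m - Phi ?R w m) = (\<lambda>m. ?S' m / ?d')" using sc(3) by auto
  have d': "?d' \<noteq> 0" using sc(1) Cons.prems(2) by simp
  define T' where "T' = alg (\<lambda>m. ?S' m / ?d') ws"
  have alg: "alg ?R (w # ws) = T'(w := step ?R w)" by (simp add: R' T'_def)
  have sumeq: "(\<Sum>w'\<in>set (w # ws). cubev w' (alg ?R (w # ws) w') m) =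
      Phi ?R w m + (\<Sum>w'\<in>set ws. cubev w' (T' w') m)" for m
  proof -
    have "(\<Sum>w'\<in>set ws. cubev w' ((T'(w := step ?R w)) w') m) = (\<Sum>w'\<in>set ws. cubev w' (T' w') m)"
      using wn by (intro sum.cong refl) auto
    then show ?thesis unfolding alg sum_cons[OF Cons.prems(1)] by (simp add: cube_step)
  qed
  have IH: "\<forall>w0\<in>set ws. \<forall>m. own w0 m \<longrightarrow> ?S' m / ?d' = (\<Sum>w'\<in>set ws. cubev w' (T' w') m)"
    using Cons.IH[OF ok d' q'] by (simp add: T'_def)
  show ?case
  proof (intro ballI allI impI)
    fix w0 m assume w0: "w0 \<in> set (w # ws)" and o: "own w0 m"
    show "?R m = (\<Sum>w'\<in>set (w # ws). cubev w' (alg ?R (w # ws) w') m)"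
    proof (cases "w0 = w")
      case True
      have "(\<Sum>w'\<in>set ws. cubev w' (T' w') m) = 0" using others_vanish[OF Cons.prems(1)] o True by blast
      moreover have "Phi ?R w m = ?R m" using Phi_own[OF sc(2) le] o True by blast
      ultimately show ?thesis unfolding sumeq by simp
    next
      case False
      then have "w0 \<in> set ws" using w0 by simp
      then have "?S' m / ?d' = (\<Sum>w'\<in>set ws. cubev w' (T' w') m)" using IH o by blast
      moreover have "?R m = (?R m - Phi ?R w m) + Phi ?R w m" by simp
      ultimately show ?thesis unfolding sumeq using sc(3)[of m] by simp
    qed
  qed
qed

lemma uniq_lemma:
  assumes "okl ws" "\<delta> \<noteq> 0" "qq S ws \<noteq> 0"
    "\<And>m. S m / \<delta> = (\<Sum>w\<in>set ws. cubev w (b w) m)"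
    "\<And>m. S m / \<delta> = (\<Sum>w\<in>set ws. cubev w (b' w) m)"
  shows "\<forall>w\<in>set ws. cubev w (b w) = cubev w (b' w) \<and> (fst w \<noteq> snd w \<longrightarrow> b w (fst w) \<noteq> 0)"
  using assms
proof (induction ws arbitrary: S \<delta>)
  case Nil then show ?case by simp
next
  case (Cons w ws)
  let ?R = "\<lambda>m. S m / \<delta>"
  let ?S' = "\<lambda>m. den S w * S m - Psi S w m" and ?d' = "den S w * \<delta>"
  have ok: "okl ws" and wn: "w \<notin> set ws" and le: "fst w \<le> snd w" using okl_cons[OF Cons.prems(1)] by auto
  have nd: "nondeg S w" and q': "qq ?S' ws \<noteq> 0" using Cons.prems(3) qq_cons_nz by auto
  note sc = scale[OF le Cons.prems(2) nd]
  have d': "?d' \<noteq> 0" using sc(1) Cons.prems(2) by simp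
  have ownb: "?R m = cubev w (b w) m" if "own w m" for m
    using Cons.prems(4)[of m] others_vanish[OF Cons.prems(1) that, of b] sum_cons[OF Cons.prems(1), of "\<lambda>w'. cubev w' (b w') m"] by simp
  have ownb': "?R m = cubev w (b' w) m" if "own w m" for m
    using Cons.prems(5)[of m] others_vanish[OF Cons.prems(1) that, of b'] sum_cons[OF Cons.prems(1), of "\<lambda>w'. cubev w' (b' w') m"] by simp
  have nz: "bb (fst w) \<noteq> 0 \<and> bb (snd w) \<noteq> 0" if ne: "fst w \<noteq> snd w"
    and own_eq: "\<And>m. own w m \<Longrightarrow> ?R m = cubev w bb m" for bb
  proof -
    have o: "own w {#fst w, fst w, snd w#}" using le by (simp add: own_def)
    have "AA ?R w \<noteq> 0" using sc(2) ne by (simp add: nondeg_def)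
    moreover have "AA ?R w = 3 * bb (fst w) ^ 2 * bb (snd w)" unfolding AA_def own_eq[OF o]
      using le ne by (intro cub2) auto
    ultimately show ?thesis by auto
  qed
  have P1: "Phi ?R w = cubev w (b w)" by (rule Phi_cube[OF le]) (use ownb nz[of "b w"] ownb in auto)
  have P2: "Phi ?R w = cubev w (b' w)" by (rule Phi_cube[OF le]) (use ownb' nz[of "b' w"] ownb' in auto)
  have rest: "?S' m / ?d' = (\<Sum>w'\<in>set ws. cubev w' (b w') m)"
    and rest': "?S' m / ?d' = (\<Sum>w'\<in>set ws. cubev w' (b' w') m)" for m
    using sc(3)[of m] Cons.prems(4)[of m] Cons.prems(5)[of m] P1 P2 sum_cons[OF Cons.prems(1), of "\<lambda>w'. cubev w' (b w') m"]
      sum_cons[OF Cons.prems(1), of "\<lambda>w'. cubev w' (b' w') m"]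
    by (simp_all add: fun_eq_iff)
  have "\<forall>w\<in>set ws. cubev w (b w) = cubev w (b' w) \<and> (fst w \<noteq> snd w \<longrightarrow> b w (fst w) \<noteq> 0)"
    by (rule Cons.IH[OF ok d' q' rest rest'])
  then show ?case using P1 P2 nz[of "b w"] ownb by auto
qed

lemma nonvanish_lemma:
  assumes "okl ws" "\<delta> \<noteq> 0" "\<And>m. S m / \<delta> = (\<Sum>w\<in>set ws. cubev w (\<lambda>k. 1) m)"
  shows "qq S ws \<noteq> 0"
  using assms
proof (induction ws arbitrary: S \<delta>)
  case Nil then show ?case by simp
next
  case (Cons w ws)
  let ?R = "\<lambda>m. S m / \<delta>"
  let ?S' = "\<lambda>m. den S w * S m - Psi S w m" and ?d' = "den S w * \<delta>"
  have ok: "okl ws" and wn: "w \<notin> set ws" and le: "fst w \<le> snd w" using okl_cons[OF Cons.prems(1)] by auto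
  have ownb: "?R m = cubev w (\<lambda>k. 1) m" if "own w m" for m
    using Cons.prems(3)[of m] others_vanish[OF Cons.prems(1) that, of "\<lambda>_ k. 1"] sum_cons[OF Cons.prems(1), of "\<lambda>w'. cubev w' (\<lambda>k. 1) m"] by simp
  have nd: "nondeg S w"
  proof -
    have "S m = \<delta> * cubev w (\<lambda>k. 1) m" if "own w m" for m using ownb[OF that] Cons.prems(2)
      by (simp add: field_simps)
    moreover have "own w {#fst w, fst w, snd w#}" "own w {#fst w, snd w, snd w#}" using le by (auto simp: own_def)
    moreover have "fst w \<noteq> snd w \<Longrightarrow> cubev w (\<lambda>k. 1) {#fst w, fst w, snd w#} = 3"
      using le by (subst cub2) auto
    moreover have "fst w \<noteq> snd w \<Longrightarrow> cubev w (\<lambda>k. 1) {#snd w, snd w, fst w#} = 3"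
      using le by (subst cub2) auto
    ultimately show ?thesis using Cons.prems(2) unfolding nondeg_def AA_def BB_def
      by (auto simp: add_mset_commute)
  qed
  note sc = scale[OF le Cons.prems(2) nd]
  have d': "?d' \<noteq> 0" using sc(1) Cons.prems(2) by simp
  have P1: "Phi ?R w = cubev w (\<lambda>k. 1)" by (rule Phi_cube[OF le]) (use ownb in auto)
  have rest: "?S' m / ?d' = (\<Sum>w'\<in>set ws. cubev w' (\<lambda>k. 1) m)" for m
    using sc(3)[of m] Cons.prems(3)[of m] P1 sum_cons[OF Cons.prems(1), of "\<lambda>w'. cubev w' (\<lambda>k. 1) m"]
    by (simp add: fun_eq_iff)
  have "qq ?S' ws \<noteq> 0" by (rule Cons.IH[OF ok d' rest])
  then show ?case using nd qq_cons_nz by blast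
qed

lemma poly_qq:
  assumes "\<And>m. poly_fun (\<lambda>c. S c m)"
  shows "poly_fun (\<lambda>c. qq (S c) ws)"
  using assms
proof (induction ws arbitrary: S)
  case Nil then show ?case by (simp add: poly_fun.const)
next
  case (Cons w ws)
  have nu: "poly_fun (\<lambda>c. nu (S c) w k)" for k
    unfolding nu_def AA_def BB_def by (intro pf_if poly_fun.mult poly_fun.const Cons.prems)
  have "poly_fun (\<lambda>c. qq (\<lambda>m. den (S c) w * S c m - Psi (S c) w m) ws)"
    by (rule Cons.IH) (unfold den_def Psi_def AA_def BB_def,
        intro pf_minus pf_if poly_fun.mult poly_fun.const Cons.prems pf_cubev nu)
  moreover have "poly_fun (\<lambda>c. if fst w = snd w then 1 else AA (S c) w * BB (S c) w)"
    unfolding AA_def BB_def by (intro pf_if poly_fun.mult poly_fun.const Cons.prems)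
  ultimately show ?case by (simp add: poly_fun.mult)
qed



definition Wn :: "nat \<Rightarrow> (nat \<times> nat) set" where "Wn n = {(i,j). i \<le> j \<and> j < n}"
definition ivs :: "nat \<Rightarrow> (nat \<times> nat) list" where
  "ivs n = sort_key (\<lambda>w. n - (snd w - fst w)) (sorted_list_of_set (Wn n))"

lemma finite_Wn: "finite (Wn n)"
  by (rule finite_subset[of _ "{..<n} \<times> {..<n}"]) (auto simp: Wn_def)

lemma set_ivs: "set (ivs n) = Wn n"
  using finite_Wn by (simp add: ivs_def)

lemma okl_ivs: "okl (ivs n)"
proof -
  have "sorted_wrt (\<lambda>x y. n - (snd x - fst x) \<le> n - (snd y - fst y)) (ivs n)"
    unfolding ivs_def by (rule sorted_map[THEN iffD1, OF sorted_sort_key])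
  then have "sorted_wrt (\<lambda>w w'. snd w' - fst w' \<le> snd w - fst w) (ivs n)"
    by (rule sorted_wrt_mono_rel[rotated]) (auto simp: set_ivs Wn_def)
  moreover have "distinct (ivs n)" using finite_Wn by (simp add: ivs_def)
  ultimately show ?thesis unfolding okl_def by (auto simp: set_ivs Wn_def)
qed

lemma zeta_lemma:
  assumes le: "fst w \<le> snd w" and eq: "cubev w a = cubev w b"
    and nz: "fst w \<noteq> snd w \<longrightarrow> a (fst w) \<noteq> 0"
  shows "\<exists>\<zeta>::complex. \<zeta> ^ 3 = 1 \<and> (\<forall>k\<in>{fst w..snd w}. b k = \<zeta> * a k)"
proof -
  let ?i = "fst w"
  have Ii: "?i \<in> {fst w..snd w}" using le by simp
  have c3: "a ?i ^ 3 = b ?i ^ 3" using cub1[OF Ii, of a] cub1[OF Ii, of b] eq by simp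
  show ?thesis
  proof (cases "a ?i = 0")
    case True
    then have ij: "fst w = snd w" using nz by auto
    have "b ?i = 0" using c3 True by simp
    then show ?thesis using True ij by (intro exI[of _ 1]) auto
  next
    case False
    have bi: "b ?i \<noteq> 0"
    proof
      assume "b ?i = 0"
      then have "a ?i ^ 3 = 0" using c3 by simp
      then show False using False by simp
    qed
    define z where "z = b ?i / a ?i"
    have z3: "z ^ 3 = 1" using c3 False bi by (simp add: z_def power_divide)
    have "b k = z * a k" if k: "k \<in> {fst w..snd w}" for k
    proof (cases "k = ?i")
      case True then show ?thesis using False by (simp add: z_def)
    next
      case ne: False
      have "3 * a ?i ^ 2 * a k = 3 * b ?i ^ 2 * b k"
        using cub2[OF Ii k ne[symmetric], of a] cub2[OF Ii k ne[symmetric], of b] eq by simp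
      then have e: "a ?i ^ 2 * a k = b ?i ^ 2 * b k" by simp
      have "b k * (b ?i ^ 2 * a ?i) = (z * a k) * (b ?i ^ 2 * a ?i)"
      proof -
        have "b k * (b ?i ^ 2 * a ?i) = a ?i ^ 3 * a k" using e by (simp add: power2_eq_square power3_eq_cube algebra_simps)
        also have "\<dots> = b ?i ^ 3 * a k" using c3 by simp
        also have "\<dots> = (z * a k) * (b ?i ^ 2 * a ?i)" using False
          by (simp add: z_def power2_eq_square power3_eq_cube field_simps)
        finally show ?thesis .
      qed
      then show ?thesis using False bi by simp
    qed
    then show ?thesis using z3 by blast
  qed
qed

lemma eval_sum: "eval_form d n (\<lambda>m. \<Sum>w\<in>A. f w m) x = (\<Sum>w\<in>A. eval_form d n (f w) x)"
  unfolding eval_form_def sum_distrib_right by (rule sum.swap)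

lemma forms_sum: "(\<And>w. w \<in> A \<Longrightarrow> f w \<in> forms d n) \<Longrightarrow> (\<lambda>m. \<Sum>w\<in>A. f w m) \<in> forms d n"
  by (auto simp: forms_def intro!: sum.neutral)

theorem theorem1p4:
  fixes n :: nat
  assumes "n \<ge> 1"
  shows "general_form 3 n (\<lambda>c. (\<exists>t. interval_cubic_rep n c t) \<and>
           (\<forall>t t'. interval_cubic_rep n c t \<longrightarrow> interval_cubic_rep n c t' \<longrightarrow> same_rep n t t'))"
proof -
  let ?W = "{(i,j). i \<le> j \<and> j < n}"
  define ws where "ws = ivs n"
  have ok: "okl ws" unfolding ws_def by (rule okl_ivs)
  have setws: "set ws = ?W" unfolding ws_def set_ivs Wn_def ..
  define q where "q = (\<lambda>c. qq c ws)"
  have pq: "poly_fun q" unfolding q_def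
    using poly_qq[where S="\<lambda>c. c" and ws=ws] by (simp add: poly_fun.var)
  have Wlt: "snd w < n" if "w \<in> ?W" for w using that by auto
  have cf: "(\<lambda>m. \<Sum>w\<in>?W. cubev w (f w) m) \<in> forms 3 n" for f
    by (rule forms_sum) (auto intro: cubev_forms)
  have ev: "eval_form 3 n (\<lambda>m. \<Sum>w\<in>?W. cubev w (f w) m) x =
      (\<Sum>(i,j)\<in>?W. (\<Sum>k=i..j. f (i,j) k * x k) ^ 3)" for f x
    unfolding eval_sum by (intro sum.cong refl) (auto simp: cubev_eval)
  define c0 where "c0 = (\<lambda>m. \<Sum>w\<in>?W. cubev w (\<lambda>k. 1) m)"
  have c0f: "c0 \<in> forms 3 n" unfolding c0_def by (rule cf)
  have qc0: "q c0 \<noteq> 0" unfolding q_def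
    by (rule nonvanish_lemma[OF ok, of 1]) (simp_all add: c0_def setws)
  have main: "(\<exists>t. interval_cubic_rep n c t) \<and>
           (\<forall>t t'. interval_cubic_rep n c t \<longrightarrow> interval_cubic_rep n c t' \<longrightarrow> same_rep n t t')"
    if cF: "c \<in> forms 3 n" and qc: "q c \<noteq> 0" for c
  proof
    have qc': "qq c ws \<noteq> 0" using qc by (simp add: q_def)
    define t where "t = alg c ws"
    have ex: "\<forall>w0\<in>set ws. \<forall>m. own w0 m \<longrightarrow> c m = (\<Sum>w'\<in>set ws. cubev w' (t w') m)"
      using exist_lemma[OF ok _ qc', of 1] by (simp add: t_def)
    have "c = (\<lambda>m. \<Sum>w\<in>?W. cubev w (t w) m)"
    proof
      fix m
      show "c m = (\<Sum>w\<in>?W. cubev w (t w) m)"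
      proof (cases "m \<in> monomials 3 n")
        case False
        then show ?thesis using cF cf[of t] by (auto simp: forms_def)
      next
        case True
        then have sz: "size m = 3" and sub: "set_mset m \<subseteq> {..<n}" by (auto simp: monomials_def)
        then have ne: "set_mset m \<noteq> {}" by auto
        define i where "i = Min (set_mset m)"
        define j where "j = Max (set_mset m)"
        have ii: "i \<in># m" and jj: "j \<in># m" using ne by (simp_all add: i_def j_def)
        have ss: "set_mset m \<subseteq> {i..j}" using ne by (auto simp: i_def j_def)
        have o: "own (i,j) m" using sz ii jj ss by (simp add: own_def)
        have "(i,j) \<in> set ws" using ii jj ss sub by (auto simp: setws)
        then show ?thesis using ex o setws by auto
      qed
    qed
    then have "interval_cubic_rep n c t" unfolding interval_cubic_rep_def using ev by metis
    then show "\<exists>t. interval_cubic_rep n c t" by blast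
  next
    have qc': "qq c ws \<noteq> 0" using qc by (simp add: q_def)
    have rep: "c = (\<lambda>m. \<Sum>w\<in>?W. cubev w (t w) m)" if "interval_cubic_rep n c t" for t
      by (rule eval_inj[OF cF cf]) (use that in \<open>simp add: fun_eq_iff interval_cubic_rep_def ev\<close>)
    show "\<forall>t t'. interval_cubic_rep n c t \<longrightarrow> interval_cubic_rep n c t' \<longrightarrow> same_rep n t t'"
    proof (intro allI impI)
      fix t t' assume t: "interval_cubic_rep n c t" and t': "interval_cubic_rep n c t'"
      have U: "\<forall>w\<in>set ws. cubev w (t w) = cubev w (t' w) \<and> (fst w \<noteq> snd w \<longrightarrow> t w (fst w) \<noteq> 0)"
        by (rule uniq_lemma[OF ok _ qc', of 1]) (use rep[OF t] rep[OF t'] setws in \<open>simp_all add: fun_eq_iff\<close>)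
      show "same_rep n t t'" unfolding same_rep_def
      proof (intro allI impI)
        fix i j assume ij: "i \<le> j \<and> j < n"
        then have "(i,j) \<in> set ws" using setws by auto
        then have "cubev (i,j) (t (i,j)) = cubev (i,j) (t' (i,j))" "i \<noteq> j \<longrightarrow> t (i,j) i \<noteq> 0"
          using U by auto
        then show "\<exists>\<zeta>::complex. \<zeta> ^ 3 = 1 \<and> (\<forall>k\<in>{i..j}. t' (i,j) k = \<zeta> * t (i,j) k)"
          using zeta_lemma[of "(i,j)" "t (i,j)" "t' (i,j)"] ij by simp
      qed
    qed
  qed
  show ?thesis unfolding general_form_def
    using pq c0f qc0 main by blast
qed


end
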